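(* Let $F_1,\dots,F_J:\mathbb{R}_+^N\to\mathbb{R}_+$ be upper semicontinuous, concave production functions that are homogeneous of degree 1 (i.e. $F_j(\lambda x)=\lambda F_j(x)$ for all $\lambda\ge 0$). Define the aggregate production function $F:\mathbb{R}_+^N\to\mathbb{R}_+$ by \[ F(x)=\max\Big\{\sum_{j=1}^J F_j(x_j): x_j\ge 0 \text{ for all } j,\ \sum_{j=1}^J x_j=x\Big\}. \] Take any $\bar{x}\in\mathbb{R}_{++}^N$ and let $w\in\mathbb{R}^N$ be a supergradient of $F$ at $\bar{x}$, that is, $F(x)-F(\bar{x})\le \langle w, x-\bar{x}\rangle$ for all $x\in\mathbb{R}_+^N$. Let $(\bar{x}_j)_{j=1}^J$ with $\bar{x}_j\ge 0$ and $\sum_{j=1}^J\bar{x}_j=\bar{x}$ be a solution of the maximization problem defining $F(\bar{x})$, and let $C$ be the smallest convex cone containing $\{\bar{x}_1,\dots,\bar{x}_J\}$. Then $F(x)=w\cdot x$ for all $x\in C$.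
   Context: $N$ inputs and one output; a production function is an upper semicontinuous map $\mathbb{R}_+^N\to\mathbb{R}_+$. There are $J$ firms with production functions $F_j$, and the aggregate production function $F$ is the maximum total output achievable by allocating the total input vector across firms. $w\cdot x$ and $\langle w,x\rangle$ denote the inner product. A set is a cone if it is closed under multiplication by nonnegative scalars. *)

theory Defs
  imports "HOL-Analysis.Analysis"
begin

text \<open>The nonnegative orthant R_+^N, with N the cardinality of the finite index type 'n.\<close>
definition nonneg_orthant :: "(real ^ 'n) set" where
  "nonneg_orthant = {x. \<forall>i. 0 \<le> x $ i}"

definition usc_on :: "('a::topological_space) set \<Rightarrow> ('a \<Rightarrow> real) \<Rightarrow> bool" where
  "usc_on S f \<longleftrightarrow> (\<forall>x\<in>S. \<forall>a. f x < a \<longrightarrow> eventually (\<lambda>y. f y < a) (at x within S))"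

definition production_function :: "(real ^ 'n \<Rightarrow> real) \<Rightarrow> bool" where
  "production_function f \<longleftrightarrow>
     (\<forall>x\<in>nonneg_orthant. 0 \<le> f x) \<and> usc_on nonneg_orthant f"

definition aggregate :: "('j::finite \<Rightarrow> real ^ 'n \<Rightarrow> real) \<Rightarrow> real ^ 'n \<Rightarrow> real" where
  "aggregate Fs x = Sup {(\<Sum>j\<in>UNIV. Fs j (xs j)) | xs.
       (\<forall>j. xs j \<in> nonneg_orthant) \<and> (\<Sum>j\<in>UNIV. xs j) = x}"

end

theory Submission
  imports Defs
begin

lemma orth_sum: "finite A \<Longrightarrow> (\<And>j. j \<in> A \<Longrightarrow> f j \<in> nonneg_orthant) \<Longrightarrow> sum f A \<in> nonneg_orthant"
  by (auto simp: nonneg_orthant_def intro!: sum_nonneg)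

lemma orth_scale: "x \<in> nonneg_orthant \<Longrightarrow> 0 \<le> c \<Longrightarrow> c *\<^sub>R x \<in> nonneg_orthant"
  by (auto simp: nonneg_orthant_def)

lemma orth_zero: "0 \<in> nonneg_orthant"
  by (auto simp: nonneg_orthant_def)

lemma part_le:
  fixes xs :: "'j::finite \<Rightarrow> real ^ 'n"
  assumes "\<forall>j. xs j \<in> nonneg_orthant"
  shows "x - xs j \<in> nonneg_orthant \<or> (\<Sum>j\<in>UNIV. xs j) \<noteq> x"
proof (cases "(\<Sum>j\<in>UNIV. xs j) = x")
  case True
  have "x - xs j = (\<Sum>k\<in>UNIV - {j}. xs k)"
    using True by (simp add: sum.remove[of UNIV j] algebra_simps)
  also have "\<dots> \<in> nonneg_orthant" using assms by (intro orth_sum) auto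
  finally show ?thesis by simp
qed simp

lemma bound_one:
  assumes conc: "concave_on nonneg_orthant f"
    and nn: "\<forall>x\<in>nonneg_orthant. 0 \<le> f x"
    and y: "y \<in> nonneg_orthant" and xy: "x - y \<in> nonneg_orthant"
  shows "f y \<le> 2 * f x"
proof -
  have x: "x \<in> nonneg_orthant" using y xy by (auto simp: nonneg_orthant_def) (smt (verit))
  have z: "x + (x - y) \<in> nonneg_orthant" using x xy by (auto simp: nonneg_orthant_def) (smt (verit))
  have "f ((1 - 1/2) *\<^sub>R y + (1/2) *\<^sub>R (x + (x - y))) \<ge> (1 - 1/2) * f y + (1/2) * f (x + (x - y))"
    by (rule concave_onD[OF conc]) (use y z in auto)
  moreover have "(1 - 1/2) *\<^sub>R y + (1/2::real) *\<^sub>R (x + (x - y)) = x"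
    by (simp add: algebra_simps scaleR_2[symmetric])
  moreover have "f (x + (x - y)) \<ge> 0" using nn z by auto
  ultimately show ?thesis by simp
qed

theorem theorem2:
  fixes Fs :: "'j::finite \<Rightarrow> real ^ 'n \<Rightarrow> real"
    and xbar w :: "real ^ 'n"
    and xbars :: "'j \<Rightarrow> real ^ 'n"
  assumes prod: "\<And>j. production_function (Fs j)"
    and conc: "\<And>j. concave_on nonneg_orthant (Fs j)"
    and hom: "\<And>j lam x. lam \<ge> 0 \<Longrightarrow> x \<in> nonneg_orthant \<Longrightarrow> Fs j (lam *\<^sub>R x) = lam * Fs j x"
    and xbar_pos: "\<And>i. xbar $ i > 0"
    and superg: "\<And>x. x \<in> nonneg_orthant \<Longrightarrow>
                   aggregate Fs x - aggregate Fs xbar \<le> w \<bullet> (x - xbar)"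
    and xbars_nonneg: "\<And>j. xbars j \<in> nonneg_orthant"
    and xbars_sum: "(\<Sum>j\<in>UNIV. xbars j) = xbar"
    and xbars_opt: "(\<Sum>j\<in>UNIV. Fs j (xbars j)) = aggregate Fs xbar"
  shows "\<forall>x \<in> convex_cone hull (range xbars). aggregate Fs x = w \<bullet> x"
proof -
  have nn: "\<And>j. \<forall>x\<in>nonneg_orthant. 0 \<le> Fs j x" using prod by (simp add: production_function_def)
  have F0: "\<And>j. Fs j 0 = 0" using hom[of 0 0] orth_zero by simp
  have xbar_orth: "xbar \<in> nonneg_orthant"
    using xbars_sum xbars_nonneg by (metis orth_sum finite)
  have G: "(\<Sum>j\<in>UNIV. Fs j (xs j)) \<le> aggregate Fs x"
    if xs: "\<forall>j. xs j \<in> nonneg_orthant" and sx: "(\<Sum>j\<in>UNIV. xs j) = x" for xs x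
  proof -
    have bd: "bdd_above {(\<Sum>j\<in>UNIV. Fs j (ys j)) | ys.
       (\<forall>j. ys j \<in> nonneg_orthant) \<and> (\<Sum>j\<in>UNIV. ys j) = x}"
    proof (rule bdd_aboveI)
      fix s assume "s \<in> {(\<Sum>j\<in>UNIV. Fs j (ys j)) | ys.
       (\<forall>j. ys j \<in> nonneg_orthant) \<and> (\<Sum>j\<in>UNIV. ys j) = x}"
      then obtain ys where ys: "\<forall>j. ys j \<in> nonneg_orthant" "(\<Sum>j\<in>UNIV. ys j) = x"
        and s: "s = (\<Sum>j\<in>UNIV. Fs j (ys j))" by blast
      have "Fs j (ys j) \<le> 2 * Fs j x" for j
        using bound_one[OF conc nn[of j], of "ys j" x] ys part_le[of ys x j] by auto
      then show "s \<le> (\<Sum>j\<in>UNIV. 2 * Fs j x)" unfolding s by (rule sum_mono)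
    qed
    show ?thesis unfolding aggregate_def
      by (rule cSup_upper[OF _ bd]) (use xs sx in blast)
  qed
  have Axbar: "aggregate Fs xbar = w \<bullet> xbar"
  proof -
    have "aggregate Fs 0 \<ge> 0"
      using G[of "\<lambda>j. 0" 0] orth_zero F0 by simp
    then have l: "aggregate Fs xbar \<ge> w \<bullet> xbar" using superg[OF orth_zero] by simp
    have "(\<Sum>j\<in>UNIV. Fs j (2 *\<^sub>R xbars j)) \<le> aggregate Fs (2 *\<^sub>R xbar)"
      by (rule G) (auto simp: xbars_sum[symmetric] scaleR_sum_right intro: orth_scale xbars_nonneg)
    moreover have "(\<Sum>j\<in>UNIV. Fs j (2 *\<^sub>R xbars j)) = 2 * aggregate Fs xbar"
      using hom[of 2] xbars_nonneg xbars_opt by (simp add: sum_distrib_left[symmetric])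
    moreover have "aggregate Fs (2 *\<^sub>R xbar) - aggregate Fs xbar \<le> w \<bullet> (2 *\<^sub>R xbar - xbar)"
      by (rule superg) (rule orth_scale[OF xbar_orth], simp)
    ultimately have "aggregate Fs xbar \<le> w \<bullet> xbar" by (simp add: algebra_simps)
    with l show ?thesis by simp
  qed
  have U: "aggregate Fs y \<le> w \<bullet> y" if "y \<in> nonneg_orthant" for y
    using superg[OF that] Axbar by (simp add: inner_diff_right)
  have single: "Fs j (xbars j) \<le> w \<bullet> xbars j" for j
  proof -
    have "(\<Sum>k\<in>UNIV. Fs k (if k = j then xbars j else 0)) \<le> aggregate Fs (xbars j)"
      by (rule G) (auto simp: orth_zero xbars_nonneg)
    moreover have "(\<Sum>k\<in>UNIV. Fs k (if k = j then xbars j else 0)) = Fs j (xbars j)"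
      by (simp add: if_distrib F0 cong: if_cong)
    ultimately show ?thesis using U[OF xbars_nonneg[of j]] by linarith
  qed
  have eqj: "Fs j (xbars j) = w \<bullet> xbars j" for j
  proof -
    have "(\<Sum>k\<in>UNIV. w \<bullet> xbars k - Fs k (xbars k)) = 0"
      using xbars_opt Axbar xbars_sum by (simp add: sum_subtractf inner_sum_right[symmetric])
    moreover have "\<forall>k\<in>UNIV. 0 \<le> w \<bullet> xbars k - Fs k (xbars k)" using single by simp
    ultimately have "\<forall>k\<in>UNIV. w \<bullet> xbars k - Fs k (xbars k) = 0"
      using sum_nonneg_eq_0_iff[of UNIV "\<lambda>k. w \<bullet> xbars k - Fs k (xbars k)"] by simp
    then show ?thesis by simp
  qed
  define K where "K = {(\<Sum>j\<in>UNIV. c j *\<^sub>R xbars j) | c. \<forall>j. 0 \<le> c j}"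
  have Kcone: "convex_cone K"
    unfolding convex_cone_iff
  proof (intro conjI ballI allI impI)
    show "0 \<in> K" unfolding K_def by (rule CollectI, rule exI[of _ "\<lambda>j. 0"]) simp
  next
    fix x y assume "x \<in> K" "y \<in> K"
    then obtain c d where "x = (\<Sum>j\<in>UNIV. c j *\<^sub>R xbars j)" "\<forall>j. 0 \<le> c j"
      "y = (\<Sum>j\<in>UNIV. d j *\<^sub>R xbars j)" "\<forall>j. 0 \<le> d j" unfolding K_def by blast
    then show "x + y \<in> K" unfolding K_def
      by (intro CollectI exI[of _ "\<lambda>j. c j + d j"]) (auto simp: scaleR_add_left sum.distrib)
  next
    fix x and a :: real assume "x \<in> K" "0 \<le> a"
    then obtain c where "x = (\<Sum>j\<in>UNIV. c j *\<^sub>R xbars j)" "\<forall>j. 0 \<le> c j"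
      unfolding K_def by blast
    then show "a *\<^sub>R x \<in> K" using \<open>0 \<le> a\<close> unfolding K_def
      by (intro CollectI exI[of _ "\<lambda>j. a * c j"]) (auto simp: scaleR_sum_right)
  qed
  have "range xbars \<subseteq> K"
  proof
    fix x assume "x \<in> range xbars"
    then obtain i where i: "x = xbars i" by blast
    have "(\<Sum>j\<in>UNIV. (if j = i then 1 else 0) *\<^sub>R xbars j) = (\<Sum>j\<in>UNIV. if j = i then xbars j else 0)"
      by (rule sum.cong) auto
    also have "\<dots> = xbars i" by simp
    finally have "(\<Sum>j\<in>UNIV. (if j = i then 1 else 0) *\<^sub>R xbars j) = xbars i" .
    then show "x \<in> K" unfolding K_def i
      by (intro CollectI exI[of _ "\<lambda>j. if j = i then 1 else 0"]) auto
  qed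
  then have sub: "convex_cone hull (range xbars) \<subseteq> K"
    by (rule hull_minimal) (rule Kcone)
  show ?thesis
  proof
    fix x assume "x \<in> convex_cone hull (range xbars)"
    with sub obtain c where c: "\<forall>j. 0 \<le> c j" and x: "x = (\<Sum>j\<in>UNIV. c j *\<^sub>R xbars j)"
      unfolding K_def by blast
    have xo: "x \<in> nonneg_orthant" unfolding x
      by (rule orth_sum) (auto intro: orth_scale xbars_nonneg c[rule_format])
    have "(\<Sum>j\<in>UNIV. Fs j (c j *\<^sub>R xbars j)) \<le> aggregate Fs x"
      by (rule G) (auto simp: x intro: orth_scale xbars_nonneg c[rule_format])
    moreover have "(\<Sum>j\<in>UNIV. Fs j (c j *\<^sub>R xbars j)) = w \<bullet> x"
      unfolding x inner_sum_right
      by (rule sum.cong) (auto simp: hom c xbars_nonneg eqj)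
    ultimately show "aggregate Fs x = w \<bullet> x" using U[OF xo] by simp
  qed
qed

end
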